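(* If $m=2$ and $k=3$, then the kernel of the Spencer operator $\mathcal S^2\colon\operatorname{Hom}(\wedge^2V,\mathfrak a)\to\operatorname{Hom}(\wedge^3V,V)$ is one-dimensional.
   Context: $\mathfrak a=\mathfrak{sl}(2,\mathbb R)\times\mathfrak{gl}(m,\mathbb R)$ acting faithfully on $V=V_k\otimes W$, where $V_k=S^k(\mathbb R^2)$ is the irreducible $(k+1)$-dimensional $\mathfrak{sl}(2,\mathbb R)$-module and $W=\mathbb R^m$ the standard $\mathfrak{gl}(m,\mathbb R)$-module. $\mathcal S^2(\phi)(v_1\wedge v_2\wedge v_3)=-\phi(v_2\wedge v_3)v_1+\phi(v_1\wedge v_3)v_2-\phi(v_1\wedge v_2)v_3$. *)

theory Defs
  imports "HOL-Analysis.Analysis" "HOL-Library.Numeral_Type"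
begin

text \<open>Index set of the basis of V = V_3 (x) W, with V_3 = S^3(R^2) (basis indexed by type 4,
  monomials u_i = e1^(3-i) e2^i) and W = R^2 (basis indexed by type 2).\<close>
type_synonym idx = "4 \<times> 2"

text \<open>Matrix (row j, column i) of the action induced by a 2x2 matrix X (acting on R^2 by
  X e1 = X11 e1 + X21 e2, X e2 = X12 e1 + X22 e2) on S^k(R^2) as a derivation, in the basis
  u_i = e1^(k-i) e2^i, i = 0..k.\<close>
definition symk_entry :: "nat \<Rightarrow> real^2^2 \<Rightarrow> nat \<Rightarrow> nat \<Rightarrow> real" where
  "symk_entry k X j i =
     (if j = i then real (k - i) * X$1$1 + real i * X$2$2
      else if j = i + 1 then real (k - i) * X$2$1
      else if i = j + 1 then real i * X$1$2
      else 0)"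

definition pos4 :: "4 \<Rightarrow> nat" where
  "pos4 i = nat (Rep_bit0 i)"

definition sl2 :: "(real^2^2) set" where
  "sl2 = {X. trace X = 0}"

text \<open>The representation of sl(2,R) x gl(2,R) on V = V_3 (x) R^2:
  (X,Y) acts by rho_3(X) (x) id + id (x) Y.\<close>
definition rho :: "real^2^2 \<Rightarrow> real^2^2 \<Rightarrow> real^idx^idx" where
  "rho X Y = (\<chi> u v. symk_entry 3 X (pos4 (fst u)) (pos4 (fst v)) * (if snd u = snd v then 1 else 0)
                     + (if fst u = fst v then 1 else 0) * Y $ snd u $ snd v)"

text \<open>The (faithful) image of the Lie algebra a = sl(2,R) x gl(2,R) in gl(V).\<close>
definition alg_a :: "(real^idx^idx) set" where
  "alg_a = {rho X Y | X Y. X \<in> sl2}"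

text \<open>A bilinear map phi : V x V -> gl(V), stored by its values on pairs of basis vectors:
  phi$p$q = phi(e_p, e_q).\<close>
type_synonym bil = "real^idx^idx^idx^idx"

definition bil_app :: "bil \<Rightarrow> real^idx \<Rightarrow> real^idx \<Rightarrow> real^idx^idx" where
  "bil_app \<phi> v w = (\<Sum>p\<in>UNIV. \<Sum>q\<in>UNIV. (v$p * w$q) *\<^sub>R (\<phi>$p$q))"

definition Hom2_a :: "bil set" where
  "Hom2_a = {\<phi>. (\<forall>v. bil_app \<phi> v v = 0) \<and> (\<forall>v w. bil_app \<phi> v w \<in> alg_a)}"

definition spencer2 :: "bil \<Rightarrow> real^idx \<Rightarrow> real^idx \<Rightarrow> real^idx \<Rightarrow> real^idx" where
  "spencer2 \<phi> v1 v2 v3 =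
     - (bil_app \<phi> v2 v3 *v v1) + (bil_app \<phi> v1 v3 *v v2) - (bil_app \<phi> v1 v2 *v v3)"

definition spencer2_kernel :: "bil set" where
  "spencer2_kernel = {\<phi> \<in> Hom2_a. \<forall>v1 v2 v3. spencer2 \<phi> v1 v2 v3 = 0}"

end

theory Submission
  imports Defs
begin


lemma two2[simp]: "(2::2) = 0" by simp
lemma four4[simp]: "(4::4) = 0" by simp

definition i4 :: "nat \<Rightarrow> 4" where
  "i4 a = (if a = 0 then 0 else if a = 1 then 1 else if a = 2 then 2 else 3)"
definition i2 :: "nat \<Rightarrow> 2" where
  "i2 b = (if b = 0 then 0 else 1)"
definition ix :: "nat \<Rightarrow> idx" where
  "ix n = (i4 (n div 2), i2 (n mod 2))"
definition nx :: "idx \<Rightarrow> nat" where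
  "nx u = 2 * pos4 (fst u) + (if snd u = 0 then 0 else 1)"

lemma pos4_simps[simp]: "pos4 0 = 0" "pos4 1 = 1" "pos4 2 = 2" "pos4 3 = 3"
  unfolding pos4_def by (simp_all add: bit0.Rep_numeral bit0.Rep_0 bit0.Rep_1)

lemma nx_lt: "nx u < 8"
proof -
  obtain a b where u: "u = (a,b)" by fastforce
  show ?thesis unfolding u nx_def using exhaust_4[of a] exhaust_2[of b] by auto
qed

lemma ix_nx: "ix (nx u) = u"
proof -
  obtain a b where u: "u = (a,b)" by fastforce
  show ?thesis unfolding u nx_def ix_def i4_def i2_def
    using exhaust_4[of a] exhaust_2[of b] by auto
qed

lemma lt8: "(r::nat) < 8 \<Longrightarrow> r = 0 \<or> r = 1 \<or> r = 2 \<or> r = 3 \<or> r = 4 \<or> r = 5 \<or> r = 6 \<or> r = 7"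
  by arith

definition sk :: "(nat \<Rightarrow> real) \<Rightarrow> nat \<Rightarrow> nat \<Rightarrow> real" where
  "sk x a b = (if a = b then (3 - 2 * real b) * x 0 else if a = b + 1 then (3 - real b) * x 2
     else if b = a + 1 then real b * x 1 else 0)"
definition Rf :: "(nat \<Rightarrow> real) \<Rightarrow> nat \<Rightarrow> nat \<Rightarrow> real" where
  "Rf x r s = (if r mod 2 = s mod 2 then sk x (r div 2) (s div 2) else 0)
     + (if r div 2 = s div 2 then x (3 + 2 * (r mod 2) + s mod 2) else 0)"

definition prm :: "real^2^2 \<Rightarrow> real^2^2 \<Rightarrow> nat \<Rightarrow> real" where
  "prm X Y k = (if k = 0 then X$1$1 else if k = 1 then X$1$0 else if k = 2 then X$0$1
     else if k = 3 then Y$0$0 else if k = 4 then Y$0$1 else if k = 5 then Y$1$0 else Y$1$1)"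

lemma trace2: "trace (X::real^2^2) = X$0$0 + X$1$1"
  unfolding trace_def by (simp add: UNIV_2)

lemma rho_ix: assumes "trace X = 0" "r < 8" "s < 8"
  shows "rho X Y $ ix r $ ix s = Rf (prm X Y) r s"
proof -
  have t: "X$0$0 = - X$1$1" using assms(1) trace2[of X] by simp
  show ?thesis
  using lt8[OF assms(2)] lt8[OF assms(3)]
  by (elim disjE) (simp_all add: rho_def ix_def i4_def i2_def Rf_def sk_def symk_entry_def prm_def t)
qed

lemma alg_param: "M \<in> alg_a \<Longrightarrow> \<exists>x. \<forall>r<8. \<forall>s<8. M $ ix r $ ix s = Rf x r s"
  unfolding alg_a_def sl2_def using rho_ix by blast


lemma bil_axis: "bil_app \<phi> (axis p 1) (axis q 1) = \<phi>$p$q"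
proof -
  have "\<And>pa qa. ((axis p 1)$pa * (axis q 1)$qa) *\<^sub>R \<phi>$pa$qa
     = (if pa = p then (if qa = q then \<phi>$p$q else 0) else 0)"
    by (simp add: axis_def)
  moreover have "\<And>pa. (\<Sum>qa\<in>UNIV. if pa = p then if qa = q then \<phi>$p$q else 0 else 0)
      = (if pa = p then \<phi>$p$q else 0)"
    by (case_tac "pa = p") simp_all
  ultimately show ?thesis unfolding bil_app_def by simp
qed

lemma bil_add1: "bil_app \<phi> (v + w) z = bil_app \<phi> v z + bil_app \<phi> w z"
  unfolding bil_app_def by (simp add: distrib_right scaleR_add_left sum.distrib)
lemma bil_add2: "bil_app \<phi> z (v + w) = bil_app \<phi> z v + bil_app \<phi> z w"
  unfolding bil_app_def by (simp add: distrib_left scaleR_add_left sum.distrib)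

lemma Hom_diag: "\<phi> \<in> Hom2_a \<Longrightarrow> \<phi>$p$p = 0"
proof -
  assume "\<phi> \<in> Hom2_a"
  then have "bil_app \<phi> (axis p 1) (axis p 1) = 0" unfolding Hom2_a_def by blast
  then show ?thesis by (simp add: bil_axis)
qed

lemma Hom_anti: assumes "\<phi> \<in> Hom2_a" shows "\<phi>$p$q = - \<phi>$q$p"
proof -
  have "bil_app \<phi> (axis p 1 + axis q 1) (axis p 1 + axis q 1) = 0"
    using assms unfolding Hom2_a_def by auto
  then have "\<phi>$p$p + \<phi>$q$p + (\<phi>$p$q + \<phi>$q$q) = 0"
    by (simp add: bil_add1 bil_add2 bil_axis)
  then have "\<phi>$p$q + \<phi>$q$p = 0" using Hom_diag[OF assms] by (simp add: add.commute)
  then show ?thesis by (simp add: eq_neg_iff_add_eq_0)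
qed

lemma Hom_alg: assumes "\<phi> \<in> Hom2_a" shows "\<phi>$p$q \<in> alg_a"
proof -
  have "bil_app \<phi> (axis p 1) (axis q 1) \<in> alg_a" using assms unfolding Hom2_a_def by blast
  then show ?thesis by (simp add: bil_axis)
qed

lemma ker_basis: assumes "\<phi> \<in> spencer2_kernel"
  shows "- (\<phi>$j$k$r$i) + \<phi>$i$k$r$j - \<phi>$i$j$r$k = 0"
proof -
  have "spencer2 \<phi> (axis i 1) (axis j 1) (axis k 1) $ r = 0"
    using assms unfolding spencer2_kernel_def by simp
  then show ?thesis
    by (simp add: spencer2_def bil_axis matrix_vector_mult_basis column_def)
qed


definition P0 :: "nat \<Rightarrow> nat \<Rightarrow> nat \<Rightarrow> real" where
  "P0 p q k = (if p = 0 \<and> q = 5 \<and> k = 1 then (3/2) else if p = 0 \<and> q = 6 \<and> k = 4 then (9/2) else if p = 0 \<and> q = 7 \<and> k = 0 then - (9/4) else if p = 0 \<and> q = 7 \<and> k = 3 then - (9/4) else if p = 0 \<and> q = 7 \<and> k = 6 then (9/4) else if p = 1 \<and> q = 4 \<and> k = 1 then - (3/2) else if p = 1 \<and> q = 6 \<and> k = 0 then (9/4) else if p = 1 \<and> q = 6 \<and> k = 3 then - (9/4) else if p = 1 \<and> q = 6 \<and> k = 6 then (9/4) else if p = 1 \<and> q = 7 \<and> k = 5 then - (9/2) else if p = 2 \<and> q = 3 \<and> k = 1 then - 1 else if p = 2 \<and> q = 4 \<and> k = 4 then - (3/2) else if p = 2 \<and> q = 5 \<and> k = 0 then (1/4)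 else if p = 2 \<and> q = 5 \<and> k = 3 then (3/4) else if p = 2 \<and> q = 5 \<and> k = 6 then - (3/4) else if p = 2 \<and> q = 7 \<and> k = 2 then - (3/2) else if p = 3 \<and> q = 4 \<and> k = 0 then - (1/4) else if p = 3 \<and> q = 4 \<and> k = 3 then (3/4) else if p = 3 \<and> q = 4 \<and> k = 6 then - (3/4) else if p = 3 \<and> q = 5 \<and> k = 5 then (3/2) else if p = 3 \<and> q = 6 \<and> k = 2 then (3/2) else if p = 4 \<and> q = 5 \<and> k = 2 then 1 else 0)"

definition En :: "(nat \<Rightarrow> nat \<Rightarrow> nat \<Rightarrow> real) \<Rightarrow> nat \<Rightarrow> nat \<Rightarrow> nat \<Rightarrow> nat \<Rightarrow> real" where
  "En P p q r s = (if p < q then Rf (P p q) r s else if q < p then - Rf (P q p) r s else 0)"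

lemma lt7: "(r::nat) < 7 \<Longrightarrow> r = 0 \<or> r = 1 \<or> r = 2 \<or> r = 3 \<or> r = 4 \<or> r = 5 \<or> r = 6"
  by arith

lemma ker_solve:
  assumes sp: "\<And>i j k r. i < 8 \<Longrightarrow> j < 8 \<Longrightarrow> k < 8 \<Longrightarrow> r < 8 \<Longrightarrow>
     - En P j k r i + En P i k r j - En P i j r k = 0"
  shows "\<forall>p q k. p < q \<longrightarrow> q < 8 \<longrightarrow> k < 7 \<longrightarrow> P p q k = P 4 5 2 * P0 p q k"
proof -
  have f_0_1_2: "P 0 1 2 = 0" using sp[of 0 1 2 4]  by (simp add: En_def Rf_def sk_def; linarith)
  have f_0_4_2: "P 0 4 2 = 0" using sp[of 0 1 4 3]  by (simp add: En_def Rf_def sk_def; linarith)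
  have f_0_1_5: "P 0 1 5 = 0" using sp[of 0 1 4 5]  by (simp add: En_def Rf_def sk_def; linarith)
  have f_1_5_2: "P 1 5 2 = 0" using sp[of 0 1 5 2]  by (simp add: En_def Rf_def sk_def; linarith)
  have f_0_1_4: "P 0 1 4 = 0" using sp[of 0 1 5 4]  by (simp add: En_def Rf_def sk_def; linarith)
  have f_1_6_2: "P 1 6 2 = 0" using sp[of 0 1 6 2]  by (simp add: En_def Rf_def sk_def; linarith)
  have f_0_6_2: "P 0 6 2 = 0" using sp[of 0 1 6 3]  by (simp add: En_def Rf_def sk_def; linarith)
  have f_0_1_1: "P 0 1 1 = 0" using sp[of 0 1 6 4]  by (simp add: En_def Rf_def sk_def; linarith)
  have f_1_7_2: "P 1 7 2 = 0" using sp[of 0 1 7 2]  by (simp add: En_def Rf_def sk_def; linarith)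
  have f_0_7_2: "P 0 7 2 = 0" using sp[of 0 1 7 3]  by (simp add: En_def Rf_def sk_def; linarith)
  have f_0_3_2: "P 0 3 2 = 0" using sp[of 0 2 3 4]  by (simp add: En_def Rf_def sk_def; linarith)
  have f_0_2_2: "P 0 2 2 = 0" using sp[of 0 2 3 5]  by (simp add: En_def Rf_def sk_def; linarith)
  have f_2_4_5: "P 2 4 5 = 0" using sp[of 0 2 4 1]  by (simp add: En_def Rf_def sk_def; linarith)
  have f_0_4_5: "P 0 4 5 = 0" using sp[of 0 2 4 3]  by (simp add: En_def Rf_def sk_def; linarith)
  have f_0_2_5: "P 0 2 5 = 0" using sp[of 0 2 4 5]  by (simp add: En_def Rf_def sk_def; linarith)
  have f_2_5_5: "P 2 5 5 = 0" using sp[of 0 2 5 1]  by (simp add: En_def Rf_def sk_def; linarith)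
  have f_2_6_5: "P 2 6 5 = 0" using sp[of 0 2 6 1]  by (simp add: En_def Rf_def sk_def; linarith)
  have f_0_6_5: "P 0 6 5 = 0" using sp[of 0 2 6 3]  by (simp add: En_def Rf_def sk_def; linarith)
  have f_2_7_5: "P 2 7 5 = 0" using sp[of 0 2 7 1]  by (simp add: En_def Rf_def sk_def; linarith)
  have f_0_7_5: "P 0 7 5 = 0" using sp[of 0 2 7 3]  by (simp add: En_def Rf_def sk_def; linarith)
  have f_0_2_1: "P 0 2 1 = 0" using sp[of 0 2 7 5]  by (simp add: En_def Rf_def sk_def; linarith)
  have f_0_2_4: "P 0 2 4 = 0" using sp[of 0 2 7 6]  by (simp add: En_def Rf_def sk_def; linarith)
  have f_0_3_4: "P 0 3 4 = 0" using sp[of 0 3 5 4]  by (simp add: En_def Rf_def sk_def; linarith)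
  have f_0_3_1: "P 0 3 1 = 0" using sp[of 0 3 6 4]  by (simp add: En_def Rf_def sk_def; linarith)
  have f_0_3_5: "P 0 3 5 = 0" using sp[of 0 3 6 7]  by (simp add: En_def Rf_def sk_def; linarith)
  have f_4_5_5: "P 4 5 5 = 0" using sp[of 0 4 5 1]  by (simp add: En_def Rf_def sk_def; linarith)
  have f_0_5_1: "P 0 5 1 = (3/2) * P 4 5 2" using sp[of 0 4 5 2]  by (simp add: En_def Rf_def sk_def; linarith)
  have f_0_4_1: "P 0 4 1 = 0" using sp[of 0 4 5 3]  by (simp add: En_def Rf_def sk_def; linarith)
  have f_0_5_2: "P 0 5 2 = 0" using sp[of 0 4 5 6]  by (simp add: En_def Rf_def sk_def; linarith)
  have f_4_6_5: "P 4 6 5 = 0" using sp[of 0 4 6 1]  by (simp add: En_def Rf_def sk_def; linarith)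
  have f_4_7_5: "P 4 7 5 = 0" using sp[of 0 4 7 1]  by (simp add: En_def Rf_def sk_def; linarith)
  have f_5_6_5: "P 5 6 5 = 0" using sp[of 0 5 6 1]  by (simp add: En_def Rf_def sk_def; linarith)
  have f_5_6_2: "P 5 6 2 = 0" using sp[of 0 5 6 2]  by (simp add: En_def Rf_def sk_def; linarith)
  have f_0_6_1: "P 0 6 1 = 0" using sp[of 0 5 6 3]  by (simp add: En_def Rf_def sk_def; linarith)
  have f_5_7_5: "P 5 7 5 = 0" using sp[of 0 5 7 1]  by (simp add: En_def Rf_def sk_def; linarith)
  have f_5_7_2: "P 5 7 2 = 0" using sp[of 0 5 7 2]  by (simp add: En_def Rf_def sk_def; linarith)
  have f_0_7_1: "P 0 7 1 = 0" using sp[of 0 5 7 3]  by (simp add: En_def Rf_def sk_def; linarith)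
  have f_0_7_4: "P 0 7 4 = 0" using sp[of 0 5 7 4]  by (simp add: En_def Rf_def sk_def; linarith)
  have f_0_5_4: "P 0 5 4 = 0" using sp[of 0 5 7 6]  by (simp add: En_def Rf_def sk_def; linarith)
  have f_6_7_5: "P 6 7 5 = 0" using sp[of 0 6 7 1]  by (simp add: En_def Rf_def sk_def; linarith)
  have f_6_7_2: "P 6 7 2 = 0" using sp[of 0 6 7 2]  by (simp add: En_def Rf_def sk_def; linarith)
  have f_1_3_2: "P 1 3 2 = 0" using sp[of 1 2 3 4]  by (simp add: En_def Rf_def sk_def; linarith)
  have f_1_2_2: "P 1 2 2 = 0" using sp[of 1 2 3 5]  by (simp add: En_def Rf_def sk_def; linarith)
  have f_1_2_5: "P 1 2 5 = 0" using sp[of 1 2 4 5]  by (simp add: En_def Rf_def sk_def; linarith)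
  have f_1_2_1: "P 1 2 1 = 0" using sp[of 1 2 7 5]  by (simp add: En_def Rf_def sk_def; linarith)
  have f_1_2_4: "P 1 2 4 = 0" using sp[of 1 2 7 6]  by (simp add: En_def Rf_def sk_def; linarith)
  have f_3_4_4: "P 3 4 4 = 0" using sp[of 1 3 4 0]  by (simp add: En_def Rf_def sk_def; linarith)
  have f_3_5_4: "P 3 5 4 = 0" using sp[of 1 3 5 0]  by (simp add: En_def Rf_def sk_def; linarith)
  have f_1_5_4: "P 1 5 4 = 0" using sp[of 1 3 5 2]  by (simp add: En_def Rf_def sk_def; linarith)
  have f_1_3_4: "P 1 3 4 = 0" using sp[of 1 3 5 4]  by (simp add: En_def Rf_def sk_def; linarith)
  have f_3_6_4: "P 3 6 4 = 0" using sp[of 1 3 6 0]  by (simp add: En_def Rf_def sk_def; linarith)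
  have f_1_6_4: "P 1 6 4 = 0" using sp[of 1 3 6 2]  by (simp add: En_def Rf_def sk_def; linarith)
  have f_1_3_1: "P 1 3 1 = 0" using sp[of 1 3 6 4]  by (simp add: En_def Rf_def sk_def; linarith)
  have f_1_3_5: "P 1 3 5 = 0" using sp[of 1 3 6 7]  by (simp add: En_def Rf_def sk_def; linarith)
  have f_3_7_4: "P 3 7 4 = 0" using sp[of 1 3 7 0]  by (simp add: En_def Rf_def sk_def; linarith)
  have f_1_7_4: "P 1 7 4 = 0" using sp[of 1 3 7 2]  by (simp add: En_def Rf_def sk_def; linarith)
  have f_4_5_4: "P 4 5 4 = 0" using sp[of 1 4 5 0]  by (simp add: En_def Rf_def sk_def; linarith)
  have f_1_5_1: "P 1 5 1 = 0" using sp[of 1 4 5 2]  by (simp add: En_def Rf_def sk_def; linarith)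
  have f_1_4_1: "P 1 4 1 = - (3/2) * P 4 5 2" using sp[of 1 4 5 3]  by (simp add: En_def Rf_def sk_def; linarith)
  have f_1_4_2: "P 1 4 2 = 0" using sp[of 1 4 5 7]  by (simp add: En_def Rf_def sk_def; linarith)
  have f_4_6_4: "P 4 6 4 = 0" using sp[of 1 4 6 0]  by (simp add: En_def Rf_def sk_def; linarith)
  have f_1_6_1: "P 1 6 1 = 0" using sp[of 1 4 6 2]  by (simp add: En_def Rf_def sk_def; linarith)
  have f_4_6_2: "P 4 6 2 = 0" using sp[of 1 4 6 3]  by (simp add: En_def Rf_def sk_def; linarith)
  have f_1_6_5: "P 1 6 5 = 0" using sp[of 1 4 6 5]  by (simp add: En_def Rf_def sk_def; linarith)
  have f_1_4_5: "P 1 4 5 = 0" using sp[of 1 4 6 7]  by (simp add: En_def Rf_def sk_def; linarith)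
  have f_4_7_4: "P 4 7 4 = 0" using sp[of 1 4 7 0]  by (simp add: En_def Rf_def sk_def; linarith)
  have f_1_7_1: "P 1 7 1 = 0" using sp[of 1 4 7 2]  by (simp add: En_def Rf_def sk_def; linarith)
  have f_4_7_2: "P 4 7 2 = 0" using sp[of 1 4 7 3]  by (simp add: En_def Rf_def sk_def; linarith)
  have f_5_6_4: "P 5 6 4 = 0" using sp[of 1 5 6 0]  by (simp add: En_def Rf_def sk_def; linarith)
  have f_5_7_4: "P 5 7 4 = 0" using sp[of 1 5 7 0]  by (simp add: En_def Rf_def sk_def; linarith)
  have f_6_7_4: "P 6 7 4 = 0" using sp[of 1 6 7 0]  by (simp add: En_def Rf_def sk_def; linarith)
  have f_3_4_1: "P 3 4 1 = 0" using sp[of 2 3 4 0]  by (simp add: En_def Rf_def sk_def; linarith)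
  have f_2_4_1: "P 2 4 1 = 0" using sp[of 2 3 4 1]  by (simp add: En_def Rf_def sk_def; linarith)
  have f_2_3_2: "P 2 3 2 = 0" using sp[of 2 3 4 6]  by (simp add: En_def Rf_def sk_def; linarith)
  have f_3_5_1: "P 3 5 1 = 0" using sp[of 2 3 5 0]  by (simp add: En_def Rf_def sk_def; linarith)
  have f_2_5_1: "P 2 5 1 = 0" using sp[of 2 3 5 1]  by (simp add: En_def Rf_def sk_def; linarith)
  have f_3_6_1: "P 3 6 1 = 0" using sp[of 2 3 6 0]  by (simp add: En_def Rf_def sk_def; linarith)
  have f_2_6_1: "P 2 6 1 = 0" using sp[of 2 3 6 1]  by (simp add: En_def Rf_def sk_def; linarith)
  have f_2_6_2: "P 2 6 2 = 0" using sp[of 2 3 6 5]  by (simp add: En_def Rf_def sk_def; linarith)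
  have f_2_3_5: "P 2 3 5 = 0" using sp[of 2 3 6 7]  by (simp add: En_def Rf_def sk_def; linarith)
  have f_3_7_1: "P 3 7 1 = 0" using sp[of 2 3 7 0]  by (simp add: En_def Rf_def sk_def; linarith)
  have f_2_7_1: "P 2 7 1 = 0" using sp[of 2 3 7 1]  by (simp add: En_def Rf_def sk_def; linarith)
  have f_3_7_2: "P 3 7 2 = 0" using sp[of 2 3 7 4]  by (simp add: En_def Rf_def sk_def; linarith)
  have f_2_3_4: "P 2 3 4 = 0" using sp[of 2 3 7 6]  by (simp add: En_def Rf_def sk_def; linarith)
  have f_4_5_1: "P 4 5 1 = 0" using sp[of 2 4 5 0]  by (simp add: En_def Rf_def sk_def; linarith)
  have f_2_5_2: "P 2 5 2 = 0" using sp[of 2 4 5 6]  by (simp add: En_def Rf_def sk_def; linarith)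
  have f_2_4_2: "P 2 4 2 = 0" using sp[of 2 4 5 7]  by (simp add: En_def Rf_def sk_def; linarith)
  have f_4_6_1: "P 4 6 1 = 0" using sp[of 2 4 6 0]  by (simp add: En_def Rf_def sk_def; linarith)
  have f_4_7_1: "P 4 7 1 = 0" using sp[of 2 4 7 0]  by (simp add: En_def Rf_def sk_def; linarith)
  have f_5_6_1: "P 5 6 1 = 0" using sp[of 2 5 6 0]  by (simp add: En_def Rf_def sk_def; linarith)
  have f_5_7_1: "P 5 7 1 = 0" using sp[of 2 5 7 0]  by (simp add: En_def Rf_def sk_def; linarith)
  have f_2_5_4: "P 2 5 4 = 0" using sp[of 2 5 7 6]  by (simp add: En_def Rf_def sk_def; linarith)
  have f_6_7_1: "P 6 7 1 = 0" using sp[of 2 6 7 0]  by (simp add: En_def Rf_def sk_def; linarith)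
  have f_3_5_2: "P 3 5 2 = 0" using sp[of 3 4 5 6]  by (simp add: En_def Rf_def sk_def; linarith)
  have f_3_4_2: "P 3 4 2 = 0" using sp[of 3 4 5 7]  by (simp add: En_def Rf_def sk_def; linarith)
  have f_3_4_5: "P 3 4 5 = 0" using sp[of 3 4 6 7]  by (simp add: En_def Rf_def sk_def; linarith)
  have f_0_5_5: "P 0 5 5 = 0" using sp[of 0 2 5 3] f_0_2_1 by (simp add: En_def Rf_def sk_def; linarith)
  have f_0_4_4: "P 0 4 4 = 0" using sp[of 0 3 4 2] f_3_4_2 f_0_3_1 by (simp add: En_def Rf_def sk_def; linarith)
  have f_3_5_5: "P 3 5 5 = (3/2) * P 4 5 2" using sp[of 0 3 5 1] f_0_5_1 by (simp add: En_def Rf_def sk_def; linarith)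
  have f_3_6_5: "P 3 6 5 = 0" using sp[of 0 3 6 1] f_0_6_1 by (simp add: En_def Rf_def sk_def; linarith)
  have f_3_7_5: "P 3 7 5 = 0" using sp[of 0 3 7 1] f_0_7_1 by (simp add: En_def Rf_def sk_def; linarith)
  have f_0_6_4: "P 0 6 4 = (9/2) * P 4 5 2" using sp[of 0 5 6 4] f_0_5_1 by (simp add: En_def Rf_def sk_def; linarith)
  have f_2_4_4: "P 2 4 4 = - (3/2) * P 4 5 2" using sp[of 1 2 4 0] f_1_4_1 by (simp add: En_def Rf_def sk_def; linarith)
  have f_1_5_5: "P 1 5 5 = 0" using sp[of 1 2 5 3] f_2_5_2 f_1_2_1 by (simp add: En_def Rf_def sk_def; linarith)
  have f_2_6_4: "P 2 6 4 = 0" using sp[of 1 2 6 0] f_1_6_1 by (simp add: En_def Rf_def sk_def; linarith)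
  have f_2_7_4: "P 2 7 4 = 0" using sp[of 1 2 7 0] f_1_7_1 by (simp add: En_def Rf_def sk_def; linarith)
  have f_1_4_4: "P 1 4 4 = 0" using sp[of 1 3 4 2] f_1_3_1 by (simp add: En_def Rf_def sk_def; linarith)
  have f_1_7_5: "P 1 7 5 = - (9/2) * P 4 5 2" using sp[of 1 4 7 5] f_1_4_1 by (simp add: En_def Rf_def sk_def; linarith)
  have f_3_6_2: "P 3 6 2 = (3/2) * P 4 5 2" using sp[of 0 3 6 2] f_0_6_4 by (simp add: En_def Rf_def sk_def; linarith)
  have f_2_7_2: "P 2 7 2 = - (3/2) * P 4 5 2" using sp[of 1 2 7 3] f_1_7_5 by (simp add: En_def Rf_def sk_def; linarith)
  have f_2_3_1: "P 2 3 1 = - 1 * P 4 5 2" using sp[of 2 3 6 4] f_3_6_2 by (simp add: En_def Rf_def sk_def; linarith)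
  have f_0_1_0: "P 0 1 0 = 0" using sp[of 0 1 2 2] sp[of 0 1 4 4] f_1_2_2 by (simp add: En_def Rf_def sk_def; linarith)
  have f_0_1_3: "P 0 1 3 = 0" using sp[of 0 1 2 2] sp[of 0 1 4 4] f_1_2_2 by (simp add: En_def Rf_def sk_def; linarith)
  have f_0_1_6: "P 0 1 6 = 0" using sp[of 0 1 4 4] sp[of 0 1 2 2] sp[of 0 1 3 3] f_0_3_2 f_1_2_2 by (simp add: En_def Rf_def sk_def; linarith)
  have f_0_2_0: "P 0 2 0 = 0" using sp[of 0 1 2 1] sp[of 0 2 3 3] f_0_3_5 f_1_2_5 by (simp add: En_def Rf_def sk_def; linarith)
  have f_0_2_3: "P 0 2 3 = 0" using sp[of 0 2 4 4] sp[of 0 1 2 1] sp[of 0 2 3 3] f_0_3_5 f_0_4_2 f_1_2_5 by (simp add: En_def Rf_def sk_def; linarith)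
  have f_0_2_6: "P 0 2 6 = 0" using sp[of 0 2 3 3] sp[of 0 1 2 1] f_0_3_5 f_1_2_5 by (simp add: En_def Rf_def sk_def; linarith)
  have f_0_3_0: "P 0 3 0 = 0" using sp[of 0 3 4 4] sp[of 0 2 3 2] f_0_2_4 f_2_3_2 by (simp add: En_def Rf_def sk_def; linarith)
  have f_0_3_3: "P 0 3 3 = 0" using sp[of 0 2 3 2] sp[of 0 3 4 4] f_0_2_4 f_2_3_2 by (simp add: En_def Rf_def sk_def; linarith)
  have f_0_3_6: "P 0 3 6 = 0" using sp[of 0 3 4 4] sp[of 0 1 3 1] sp[of 0 2 3 2] f_0_1_1 f_0_2_4 f_1_3_5 f_2_3_2 by (simp add: En_def Rf_def sk_def; linarith)
  have f_0_4_0: "P 0 4 0 = 0" using sp[of 0 1 4 1] sp[of 0 3 4 3] f_1_4_5 by (simp add: En_def Rf_def sk_def; linarith)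
  have f_0_4_3: "P 0 4 3 = 0" using sp[of 0 2 4 2] sp[of 0 1 4 1] sp[of 0 3 4 3] f_0_2_1 f_1_4_5 f_2_4_2 by (simp add: En_def Rf_def sk_def; linarith)
  have f_0_4_6: "P 0 4 6 = 0" using sp[of 0 3 4 3] sp[of 0 1 4 1] f_1_4_5 by (simp add: En_def Rf_def sk_def; linarith)
  have f_0_5_0: "P 0 5 0 = 0" using sp[of 0 1 5 1] sp[of 0 3 5 3] f_0_3_1 f_1_5_5 by (simp add: En_def Rf_def sk_def; linarith)
  have f_0_5_3: "P 0 5 3 = 0" using sp[of 0 2 5 2] sp[of 0 1 5 1] sp[of 0 3 5 3] f_0_3_1 f_1_5_5 f_2_5_2 by (simp add: En_def Rf_def sk_def; linarith)
  have f_0_5_6: "P 0 5 6 = 0" using sp[of 0 3 5 3] sp[of 0 1 5 1] f_0_3_1 f_1_5_5 by (simp add: En_def Rf_def sk_def; linarith)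
  have f_0_6_0: "P 0 6 0 = 0" using sp[of 0 1 6 1] sp[of 0 3 6 3] f_1_6_5 by (simp add: En_def Rf_def sk_def; linarith)
  have f_0_6_3: "P 0 6 3 = 0" using sp[of 0 2 6 2] sp[of 0 1 6 1] sp[of 0 3 6 3] f_1_6_5 f_2_6_2 by (simp add: En_def Rf_def sk_def; linarith)
  have f_0_6_6: "P 0 6 6 = 0" using sp[of 0 3 6 3] sp[of 0 1 6 1] f_1_6_5 by (simp add: En_def Rf_def sk_def; linarith)
  have f_0_7_0: "P 0 7 0 = - (9/4) * P 4 5 2" using sp[of 0 1 7 1] sp[of 0 3 7 3] f_1_7_5 by (simp add: En_def Rf_def sk_def; linarith)
  have f_0_7_3: "P 0 7 3 = - (9/4) * P 4 5 2" using sp[of 0 2 7 2] sp[of 0 1 7 1] sp[of 0 3 7 3] f_1_7_5 f_2_7_2 by (simp add: En_def Rf_def sk_def; linarith)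
  have f_0_7_6: "P 0 7 6 = (9/4) * P 4 5 2" using sp[of 0 3 7 3] sp[of 0 1 7 1] f_1_7_5 by (simp add: En_def Rf_def sk_def; linarith)
  have f_1_2_0: "P 1 2 0 = 0" using sp[of 0 1 2 0] sp[of 1 2 4 4] f_0_1_1 f_0_2_4 f_1_4_2 by (simp add: En_def Rf_def sk_def; linarith)
  have f_1_2_3: "P 1 2 3 = 0" using sp[of 0 1 2 0] sp[of 1 2 4 4] f_0_1_1 f_0_2_4 f_1_4_2 by (simp add: En_def Rf_def sk_def; linarith)
  have f_1_2_6: "P 1 2 6 = 0" using sp[of 1 2 4 4] sp[of 0 1 2 0] sp[of 1 2 3 3] f_0_1_1 f_0_2_4 f_1_3_5 f_1_4_2 f_2_3_2 by (simp add: En_def Rf_def sk_def; linarith)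
  have f_1_3_0: "P 1 3 0 = 0" using sp[of 0 1 3 0] sp[of 1 2 3 2] f_0_3_4 f_1_2_4 by (simp add: En_def Rf_def sk_def; linarith)
  have f_1_3_3: "P 1 3 3 = 0" using sp[of 1 2 3 2] sp[of 0 1 3 0] f_0_3_4 f_1_2_4 by (simp add: En_def Rf_def sk_def; linarith)
  have f_1_3_6: "P 1 3 6 = 0" using sp[of 1 3 5 5] sp[of 0 1 3 0] sp[of 1 2 3 2] f_0_3_4 f_1_2_4 f_1_5_2 by (simp add: En_def Rf_def sk_def; linarith)
  have f_1_4_0: "P 1 4 0 = 0" using sp[of 0 1 4 0] sp[of 1 2 4 2] f_0_4_4 f_1_2_1 by (simp add: En_def Rf_def sk_def; linarith)
  have f_1_4_3: "P 1 4 3 = 0" using sp[of 1 2 4 2] sp[of 0 1 4 0] f_0_4_4 f_1_2_1 by (simp add: En_def Rf_def sk_def; linarith)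
  have f_1_4_6: "P 1 4 6 = 0" using sp[of 1 3 4 3] sp[of 0 1 4 0] sp[of 1 2 4 2] f_0_4_4 f_1_2_1 f_3_4_2 by (simp add: En_def Rf_def sk_def; linarith)
  have f_1_5_0: "P 1 5 0 = 0" using sp[of 0 1 5 0] sp[of 1 2 5 2] f_0_5_4 by (simp add: En_def Rf_def sk_def; linarith)
  have f_1_5_3: "P 1 5 3 = 0" using sp[of 1 2 5 2] sp[of 0 1 5 0] f_0_5_4 by (simp add: En_def Rf_def sk_def; linarith)
  have f_1_5_6: "P 1 5 6 = 0" using sp[of 1 3 5 3] sp[of 0 1 5 0] sp[of 1 2 5 2] f_0_5_4 f_1_3_1 f_3_5_2 by (simp add: En_def Rf_def sk_def; linarith)
  have f_1_6_0: "P 1 6 0 = (9/4) * P 4 5 2" using sp[of 0 1 6 0] sp[of 1 2 6 2] f_0_6_4 by (simp add: En_def Rf_def sk_def; linarith)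
  have f_1_6_3: "P 1 6 3 = - (9/4) * P 4 5 2" using sp[of 1 2 6 2] sp[of 0 1 6 0] f_0_6_4 by (simp add: En_def Rf_def sk_def; linarith)
  have f_1_6_6: "P 1 6 6 = (9/4) * P 4 5 2" using sp[of 1 3 6 3] sp[of 0 1 6 0] sp[of 1 2 6 2] f_0_6_4 f_3_6_2 by (simp add: En_def Rf_def sk_def; linarith)
  have f_1_7_0: "P 1 7 0 = 0" using sp[of 0 1 7 0] sp[of 1 2 7 2] f_0_7_4 by (simp add: En_def Rf_def sk_def; linarith)
  have f_1_7_3: "P 1 7 3 = 0" using sp[of 1 2 7 2] sp[of 0 1 7 0] f_0_7_4 by (simp add: En_def Rf_def sk_def; linarith)
  have f_1_7_6: "P 1 7 6 = 0" using sp[of 1 3 7 3] sp[of 0 1 7 0] sp[of 1 2 7 2] f_0_7_4 f_3_7_2 by (simp add: En_def Rf_def sk_def; linarith)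
  have f_2_3_0: "P 2 3 0 = 0" using sp[of 0 2 3 0] sp[of 2 3 4 4] f_0_3_1 f_3_4_2 by (simp add: En_def Rf_def sk_def; linarith)
  have f_2_3_3: "P 2 3 3 = 0" using sp[of 0 2 3 0] sp[of 2 3 4 4] f_0_3_1 f_3_4_2 by (simp add: En_def Rf_def sk_def; linarith)
  have f_2_3_6: "P 2 3 6 = 0" using sp[of 2 3 4 4] sp[of 0 2 3 0] sp[of 1 2 3 1] f_0_3_1 f_1_2_1 f_3_4_2 by (simp add: En_def Rf_def sk_def; linarith)
  have f_2_4_0: "P 2 4 0 = 0" using sp[of 1 2 4 1] sp[of 2 3 4 3] f_3_4_5 by (simp add: En_def Rf_def sk_def; linarith)
  have f_2_4_3: "P 2 4 3 = 0" using sp[of 1 2 4 1] sp[of 0 2 4 0] sp[of 2 3 4 3] f_0_4_1 f_3_4_5 by (simp add: En_def Rf_def sk_def; linarith)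
  have f_2_4_6: "P 2 4 6 = 0" using sp[of 2 3 4 3] sp[of 1 2 4 1] f_3_4_5 by (simp add: En_def Rf_def sk_def; linarith)
  have f_2_5_0: "P 2 5 0 = (1/4) * P 4 5 2" using sp[of 1 2 5 1] sp[of 2 3 5 3] f_2_3_1 f_3_5_5 by (simp add: En_def Rf_def sk_def; linarith)
  have f_2_5_3: "P 2 5 3 = (3/4) * P 4 5 2" using sp[of 1 2 5 1] sp[of 0 2 5 0] sp[of 2 3 5 3] f_0_5_1 f_2_3_1 f_3_5_5 by (simp add: En_def Rf_def sk_def; linarith)
  have f_2_5_6: "P 2 5 6 = - (3/4) * P 4 5 2" using sp[of 2 3 5 3] sp[of 1 2 5 1] f_2_3_1 f_3_5_5 by (simp add: En_def Rf_def sk_def; linarith)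
  have f_2_6_0: "P 2 6 0 = 0" using sp[of 1 2 6 1] sp[of 2 3 6 3] f_3_6_5 by (simp add: En_def Rf_def sk_def; linarith)
  have f_2_6_3: "P 2 6 3 = 0" using sp[of 1 2 6 1] sp[of 0 2 6 0] sp[of 2 3 6 3] f_0_6_1 f_3_6_5 by (simp add: En_def Rf_def sk_def; linarith)
  have f_2_6_6: "P 2 6 6 = 0" using sp[of 2 3 6 3] sp[of 1 2 6 1] f_3_6_5 by (simp add: En_def Rf_def sk_def; linarith)
  have f_2_7_0: "P 2 7 0 = 0" using sp[of 1 2 7 1] sp[of 2 3 7 3] f_3_7_5 by (simp add: En_def Rf_def sk_def; linarith)
  have f_2_7_3: "P 2 7 3 = 0" using sp[of 1 2 7 1] sp[of 0 2 7 0] sp[of 2 3 7 3] f_0_7_1 f_3_7_5 by (simp add: En_def Rf_def sk_def; linarith)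
  have f_2_7_6: "P 2 7 6 = 0" using sp[of 2 3 7 3] sp[of 1 2 7 1] f_3_7_5 by (simp add: En_def Rf_def sk_def; linarith)
  have f_3_4_0: "P 3 4 0 = - (1/4) * P 4 5 2" using sp[of 0 3 4 0] sp[of 2 3 4 2] f_2_3_1 f_2_4_4 by (simp add: En_def Rf_def sk_def; linarith)
  have f_3_4_3: "P 3 4 3 = (3/4) * P 4 5 2" using sp[of 0 3 4 0] sp[of 2 3 4 2] f_2_3_1 f_2_4_4 by (simp add: En_def Rf_def sk_def; linarith)
  have f_3_4_6: "P 3 4 6 = - (3/4) * P 4 5 2" using sp[of 2 3 4 2] sp[of 0 3 4 0] sp[of 1 3 4 1] f_1_4_1 f_2_3_1 f_2_4_4 by (simp add: En_def Rf_def sk_def; linarith)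
  have f_3_5_0: "P 3 5 0 = 0" using sp[of 0 3 5 0] sp[of 2 3 5 2] f_2_5_4 by (simp add: En_def Rf_def sk_def; linarith)
  have f_3_5_3: "P 3 5 3 = 0" using sp[of 0 3 5 0] sp[of 2 3 5 2] f_2_5_4 by (simp add: En_def Rf_def sk_def; linarith)
  have f_3_5_6: "P 3 5 6 = 0" using sp[of 2 3 5 2] sp[of 0 3 5 0] sp[of 1 3 5 1] f_1_5_1 f_2_5_4 by (simp add: En_def Rf_def sk_def; linarith)
  have f_3_6_0: "P 3 6 0 = 0" using sp[of 0 3 6 0] sp[of 2 3 6 2] f_2_6_4 by (simp add: En_def Rf_def sk_def; linarith)
  have f_3_6_3: "P 3 6 3 = 0" using sp[of 0 3 6 0] sp[of 2 3 6 2] f_2_6_4 by (simp add: En_def Rf_def sk_def; linarith)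
  have f_3_6_6: "P 3 6 6 = 0" using sp[of 2 3 6 2] sp[of 0 3 6 0] sp[of 1 3 6 1] f_1_6_1 f_2_6_4 by (simp add: En_def Rf_def sk_def; linarith)
  have f_3_7_0: "P 3 7 0 = 0" using sp[of 0 3 7 0] sp[of 2 3 7 2] f_2_7_4 by (simp add: En_def Rf_def sk_def; linarith)
  have f_3_7_3: "P 3 7 3 = 0" using sp[of 0 3 7 0] sp[of 2 3 7 2] f_2_7_4 by (simp add: En_def Rf_def sk_def; linarith)
  have f_3_7_6: "P 3 7 6 = 0" using sp[of 2 3 7 2] sp[of 0 3 7 0] sp[of 1 3 7 1] f_1_7_1 f_2_7_4 by (simp add: En_def Rf_def sk_def; linarith)
  have f_4_5_0: "P 4 5 0 = 0" using sp[of 0 4 5 0] sp[of 2 4 5 2] f_2_5_1 by (simp add: En_def Rf_def sk_def; linarith)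
  have f_4_5_3: "P 4 5 3 = 0" using sp[of 0 4 5 0] sp[of 2 4 5 2] f_2_5_1 by (simp add: En_def Rf_def sk_def; linarith)
  have f_4_5_6: "P 4 5 6 = 0" using sp[of 2 4 5 2] sp[of 0 4 5 0] sp[of 1 4 5 1] f_2_5_1 by (simp add: En_def Rf_def sk_def; linarith)
  have f_4_6_0: "P 4 6 0 = 0" using sp[of 0 4 6 0] sp[of 2 4 6 2] f_2_6_1 by (simp add: En_def Rf_def sk_def; linarith)
  have f_4_6_3: "P 4 6 3 = 0" using sp[of 0 4 6 0] sp[of 2 4 6 2] f_2_6_1 by (simp add: En_def Rf_def sk_def; linarith)
  have f_4_6_6: "P 4 6 6 = 0" using sp[of 2 4 6 2] sp[of 0 4 6 0] sp[of 1 4 6 1] f_2_6_1 by (simp add: En_def Rf_def sk_def; linarith)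
  have f_4_7_0: "P 4 7 0 = 0" using sp[of 0 4 7 0] sp[of 2 4 7 2] f_2_7_1 by (simp add: En_def Rf_def sk_def; linarith)
  have f_4_7_3: "P 4 7 3 = 0" using sp[of 0 4 7 0] sp[of 2 4 7 2] f_2_7_1 by (simp add: En_def Rf_def sk_def; linarith)
  have f_4_7_6: "P 4 7 6 = 0" using sp[of 2 4 7 2] sp[of 0 4 7 0] sp[of 1 4 7 1] f_2_7_1 by (simp add: En_def Rf_def sk_def; linarith)
  have f_5_6_0: "P 5 6 0 = 0" using sp[of 0 5 6 0] sp[of 2 5 6 2]  by (simp add: En_def Rf_def sk_def; linarith)
  have f_5_6_3: "P 5 6 3 = 0" using sp[of 0 5 6 0] sp[of 2 5 6 2]  by (simp add: En_def Rf_def sk_def; linarith)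
  have f_5_6_6: "P 5 6 6 = 0" using sp[of 2 5 6 2] sp[of 0 5 6 0] sp[of 1 5 6 1]  by (simp add: En_def Rf_def sk_def; linarith)
  have f_5_7_0: "P 5 7 0 = 0" using sp[of 0 5 7 0] sp[of 2 5 7 2]  by (simp add: En_def Rf_def sk_def; linarith)
  have f_5_7_3: "P 5 7 3 = 0" using sp[of 0 5 7 0] sp[of 2 5 7 2]  by (simp add: En_def Rf_def sk_def; linarith)
  have f_5_7_6: "P 5 7 6 = 0" using sp[of 2 5 7 2] sp[of 0 5 7 0] sp[of 1 5 7 1]  by (simp add: En_def Rf_def sk_def; linarith)
  have f_6_7_0: "P 6 7 0 = 0" using sp[of 0 6 7 0] sp[of 2 6 7 2]  by (simp add: En_def Rf_def sk_def; linarith)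
  have f_6_7_3: "P 6 7 3 = 0" using sp[of 0 6 7 0] sp[of 2 6 7 2]  by (simp add: En_def Rf_def sk_def; linarith)
  have f_6_7_6: "P 6 7 6 = 0" using sp[of 2 6 7 2] sp[of 0 6 7 0] sp[of 1 6 7 1]  by (simp add: En_def Rf_def sk_def; linarith)
  note facts = f_0_1_0 f_0_1_1 f_0_1_2 f_0_1_3 f_0_1_4 f_0_1_5 f_0_1_6 f_0_2_0 f_0_2_1 f_0_2_2 f_0_2_3 f_0_2_4 f_0_2_5 f_0_2_6 f_0_3_0 f_0_3_1 f_0_3_2 f_0_3_3 f_0_3_4 f_0_3_5 f_0_3_6 f_0_4_0 f_0_4_1 f_0_4_2 f_0_4_3 f_0_4_4 f_0_4_5 f_0_4_6 f_0_5_0 f_0_5_1 f_0_5_2 f_0_5_3 f_0_5_4 f_0_5_5 f_0_5_6 f_0_6_0 f_0_6_1 f_0_6_2 f_0_6_3 f_0_6_4 f_0_6_5 f_0_6_6 f_0_7_0 f_0_7_1 f_0_7_2 f_0_7_3 f_0_7_4 f_0_7_5 f_0_7_6 f_1_2_0 f_1_2_1 f_1_2_2 f_1_2_3 f_1_2_4 f_1_2_5 f_1_2_6 f_1_3_0 f_1_3_1 f_1_3_2 f_1_3_3 f_1_3_4 f_1_3_5 f_1_3_6 f_1_4_0 f_1_4_1 f_1_4_2 f_1_4_3 f_1_4_4 f_1_4_5 f_1_4_6 f_1_5_0 f_1_5_1 f_1_5_2 f_1_5_3 f_1_5_4 f_1_5_5 f_1_5_6 f_1_6_0 f_1_6_1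 f_1_6_2 f_1_6_3 f_1_6_4 f_1_6_5 f_1_6_6 f_1_7_0 f_1_7_1 f_1_7_2 f_1_7_3 f_1_7_4 f_1_7_5 f_1_7_6 f_2_3_0 f_2_3_1 f_2_3_2 f_2_3_3 f_2_3_4 f_2_3_5 f_2_3_6 f_2_4_0 f_2_4_1 f_2_4_2 f_2_4_3 f_2_4_4 f_2_4_5 f_2_4_6 f_2_5_0 f_2_5_1 f_2_5_2 f_2_5_3 f_2_5_4 f_2_5_5 f_2_5_6 f_2_6_0 f_2_6_1 f_2_6_2 f_2_6_3 f_2_6_4 f_2_6_5 f_2_6_6 f_2_7_0 f_2_7_1 f_2_7_2 f_2_7_3 f_2_7_4 f_2_7_5 f_2_7_6 f_3_4_0 f_3_4_1 f_3_4_2 f_3_4_3 f_3_4_4 f_3_4_5 f_3_4_6 f_3_5_0 f_3_5_1 f_3_5_2 f_3_5_3 f_3_5_4 f_3_5_5 f_3_5_6 f_3_6_0 f_3_6_1 f_3_6_2 f_3_6_3 f_3_6_4 f_3_6_5 f_3_6_6 f_3_7_0 f_3_7_1 f_3_7_2 f_3_7_3 f_3_7_4 f_3_7_5 f_3_7_6 f_4_5_0 f_4_5_1 f_4_5_3 f_4_5_4 f_4_5_5 f_4_5_6 f_4_6_0 f_4_6_1 f_4_6_2 f_4_6_3 f_4_6_4 f_4_6_5 f_4_6_6 f_4_7_0 f_4_7_1 f_4_7_2 f_4_7_3 f_4_7_4 f_4_7_5 f_4_7_6 f_5_6_0 f_5_6_1 f_5_6_2 f_5_6_3 f_5_6_4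 f_5_6_5 f_5_6_6 f_5_7_0 f_5_7_1 f_5_7_2 f_5_7_3 f_5_7_4 f_5_7_5 f_5_7_6 f_6_7_0 f_6_7_1 f_6_7_2 f_6_7_3 f_6_7_4 f_6_7_5 f_6_7_6
  have g0: "\<And>q k. 0 < q \<Longrightarrow> q < 8 \<Longrightarrow> k < 7 \<Longrightarrow> P 0 q k = P 4 5 2 * P0 0 q k"
  proof -
    fix q k :: nat assume a: "0 < q" "q < 8" "k < 7"
    show "P 0 q k = P 4 5 2 * P0 0 q k"
      using lt8[OF a(2)] lt7[OF a(3)] a(1)
      apply (elim disjE) apply (simp_all add: P0_def facts facts[unfolded One_nat_def]) done
  qed
  have g1: "\<And>q k. 1 < q \<Longrightarrow> q < 8 \<Longrightarrow> k < 7 \<Longrightarrow> P 1 q k = P 4 5 2 * P0 1 q k"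
  proof -
    fix q k :: nat assume a: "1 < q" "q < 8" "k < 7"
    show "P 1 q k = P 4 5 2 * P0 1 q k"
      using lt8[OF a(2)] lt7[OF a(3)] a(1)
      apply (elim disjE) apply (simp_all add: P0_def facts facts[unfolded One_nat_def]) done
  qed
  have g2: "\<And>q k. 2 < q \<Longrightarrow> q < 8 \<Longrightarrow> k < 7 \<Longrightarrow> P 2 q k = P 4 5 2 * P0 2 q k"
  proof -
    fix q k :: nat assume a: "2 < q" "q < 8" "k < 7"
    show "P 2 q k = P 4 5 2 * P0 2 q k"
      using lt8[OF a(2)] lt7[OF a(3)] a(1)
      apply (elim disjE) apply (simp_all add: P0_def facts facts[unfolded One_nat_def]) done
  qed
  have g3: "\<And>q k. 3 < q \<Longrightarrow> q < 8 \<Longrightarrow> k < 7 \<Longrightarrow> P 3 q k = P 4 5 2 * P0 3 q k"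
  proof -
    fix q k :: nat assume a: "3 < q" "q < 8" "k < 7"
    show "P 3 q k = P 4 5 2 * P0 3 q k"
      using lt8[OF a(2)] lt7[OF a(3)] a(1)
      apply (elim disjE) apply (simp_all add: P0_def facts facts[unfolded One_nat_def]) done
  qed
  have g4: "\<And>q k. 4 < q \<Longrightarrow> q < 8 \<Longrightarrow> k < 7 \<Longrightarrow> P 4 q k = P 4 5 2 * P0 4 q k"
  proof -
    fix q k :: nat assume a: "4 < q" "q < 8" "k < 7"
    show "P 4 q k = P 4 5 2 * P0 4 q k"
      using lt8[OF a(2)] lt7[OF a(3)] a(1)
      apply (elim disjE) apply (simp_all add: P0_def facts facts[unfolded One_nat_def]) done
  qed
  have g5: "\<And>q k. 5 < q \<Longrightarrow> q < 8 \<Longrightarrow> k < 7 \<Longrightarrow> P 5 q k = P 4 5 2 * P0 5 q k"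
  proof -
    fix q k :: nat assume a: "5 < q" "q < 8" "k < 7"
    show "P 5 q k = P 4 5 2 * P0 5 q k"
      using lt8[OF a(2)] lt7[OF a(3)] a(1)
      apply (elim disjE) apply (simp_all add: P0_def facts facts[unfolded One_nat_def]) done
  qed
  have g6: "\<And>q k. 6 < q \<Longrightarrow> q < 8 \<Longrightarrow> k < 7 \<Longrightarrow> P 6 q k = P 4 5 2 * P0 6 q k"
  proof -
    fix q k :: nat assume a: "6 < q" "q < 8" "k < 7"
    show "P 6 q k = P 4 5 2 * P0 6 q k"
      using lt8[OF a(2)] lt7[OF a(3)] a(1)
      apply (elim disjE) apply (simp_all add: P0_def facts facts[unfolded One_nat_def]) done
  qed
  show ?thesis
  proof (intro allI impI)
    fix p q k :: nat assume a: "p < q" "q < 8" "k < 7"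
    then have "p < 7" by simp
    then have "p = 0 \<or> p = 1 \<or> p = 2 \<or> p = 3 \<or> p = 4 \<or> p = 5 \<or> p = 6" by arith
    then show "P p q k = P 4 5 2 * P0 p q k"
    proof (elim disjE)
      assume h: "p = 0" show ?thesis using g0[of q k] a unfolding h by blast
    next
      assume h: "p = 1" show ?thesis using g1[of q k] a unfolding h by blast
    next
      assume h: "p = 2" show ?thesis using g2[of q k] a unfolding h by blast
    next
      assume h: "p = 3" show ?thesis using g3[of q k] a unfolding h by blast
    next
      assume h: "p = 4" show ?thesis using g4[of q k] a unfolding h by blast
    next
      assume h: "p = 5" show ?thesis using g5[of q k] a unfolding h by blast
    next
      assume h: "p = 6" show ?thesis using g6[of q k] a unfolding h by blast
    qed
  qed
qed


lemma Rf_scale: assumes "\<forall>k<7. x k = t * y k" shows "Rf x r s = t * Rf y r s"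
proof -
  have i: "3 + 2 * (r mod 2) + s mod 2 < (7::nat)" by arith
  have e: "x 0 = t * y 0" "x 1 = t * y 1" "x 2 = t * y 2"
     "x (3 + 2 * (r mod 2) + s mod 2) = t * y (3 + 2 * (r mod 2) + s mod 2)"
    using assms i by auto
  show ?thesis unfolding Rf_def sk_def e by (simp add: algebra_simps)
qed

lemma En_scale: assumes "\<forall>p q k. p < q \<longrightarrow> q < 8 \<longrightarrow> k < 7 \<longrightarrow> P p q k = t * Q p q k"
  and "p < 8" "q < 8"
  shows "En P p q r s = t * En Q p q r s"
proof -
  have "p < q \<Longrightarrow> Rf (P p q) r s = t * Rf (Q p q) r s"
    using assms by (intro Rf_scale) auto
  moreover have "q < p \<Longrightarrow> Rf (P q p) r s = t * Rf (Q q p) r s"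
    using assms by (intro Rf_scale) auto
  ultimately show ?thesis unfolding En_def by auto
qed

lemma En_anti: "En P q p r s = - En P p q r s"
  unfolding En_def by auto

lemma ker_En: assumes "\<phi> \<in> spencer2_kernel"
  shows "\<exists>P. \<forall>p<8. \<forall>q<8. \<forall>r<8. \<forall>s<8. \<phi>$ix p$ix q$ix r$ix s = En P p q r s"
proof -
  have H: "\<phi> \<in> Hom2_a" using assms unfolding spencer2_kernel_def by simp
  have "\<forall>p q. \<exists>x. \<forall>r<8. \<forall>s<8. \<phi>$ix p$ix q$ix r$ix s = Rf x r s"
    using alg_param Hom_alg[OF H] by blast
  then obtain P where P: "\<And>p q r s. r < 8 \<Longrightarrow> s < 8 \<Longrightarrow> \<phi>$ix p$ix q$ix r$ix s = Rf (P p q) r s"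
    by metis
  have "\<phi>$ix p$ix q$ix r$ix s = En P p q r s" if "r < 8" "s < 8" for p q r s
  proof -
    have "\<phi>$ix p$ix q = - \<phi>$ix q$ix p" using Hom_anti[OF H] .
    then have a: "\<phi>$ix p$ix q$ix r$ix s = - (\<phi>$ix q$ix p$ix r$ix s)" by simp
    show ?thesis using P[OF that] a Hom_diag[OF H] unfolding En_def by auto
  qed
  then show ?thesis by blast
qed

definition phi0 :: bil where
  "phi0 = (\<chi> u v w z. En P0 (nx u) (nx v) (nx w) (nx z))"

lemma ker_mult: assumes "\<phi> \<in> spencer2_kernel" shows "\<phi> \<in> span {phi0}"
proof -
  obtain P where P: "\<forall>p<8. \<forall>q<8. \<forall>r<8. \<forall>s<8. \<phi>$ix p$ix q$ix r$ix s = En P p q r s"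
    using ker_En[OF assms] by blast
  have sp: "- En P j k r i + En P i k r j - En P i j r k = 0"
    if "i < 8" "j < 8" "k < 8" "r < 8" for i j k r
    using ker_basis[OF assms, of "ix j" "ix k" "ix r" "ix i"] P that by simp
  have sol: "\<forall>p q k. p < q \<longrightarrow> q < 8 \<longrightarrow> k < 7 \<longrightarrow> P p q k = P 4 5 2 * P0 p q k"
    by (rule ker_solve) (rule sp)
  have "\<phi> = P 4 5 2 *\<^sub>R phi0"
  proof (simp add: vec_eq_iff phi0_def, intro allI)
    fix u v w z :: idx
    have "\<phi>$u$v$w$z = \<phi>$ix (nx u)$ix (nx v)$ix (nx w)$ix (nx z)" by (simp add: ix_nx)
    also have "\<dots> = En P (nx u) (nx v) (nx w) (nx z)" using P nx_lt by blast
    also have "\<dots> = P 4 5 2 * En P0 (nx u) (nx v) (nx w) (nx z)"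
      by (rule En_scale[OF sol nx_lt nx_lt])
    finally show "\<phi>$u$v$w$z = P 4 5 2 * En P0 (nx u) (nx v) (nx w) (nx z)" .
  qed
  then show ?thesis by (simp add: span_base span_scale)
qed

lemma rho_add: "rho X Y + rho X' Y' = rho (X + X') (Y + Y')"
  by (simp add: vec_eq_iff rho_def symk_entry_def algebra_simps)
lemma rho_scale: "c *\<^sub>R rho X Y = rho (c *\<^sub>R X) (c *\<^sub>R Y)"
  by (simp add: vec_eq_iff rho_def symk_entry_def algebra_simps)
lemma trace_add': "trace (X + X' :: real^2^2) = trace X + trace X'"
  by (simp add: trace2)
lemma trace_scale': "trace (c *\<^sub>R X :: real^2^2) = c * trace X"
  by (simp add: trace2 algebra_simps)

lemma subspace_alg: "subspace alg_a"
  unfolding subspace_def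
proof (intro conjI ballI allI)
  have "(0::real^idx^idx) = rho 0 0" by (simp add: vec_eq_iff rho_def symk_entry_def)
  moreover have "trace (0::real^2^2) = 0" by (simp add: trace2)
  ultimately show "0 \<in> alg_a" unfolding alg_a_def sl2_def by blast
next
  fix x y assume "x \<in> alg_a" "y \<in> alg_a"
  then obtain X Y X' Y' where "x = rho X Y" "trace X = 0" "y = rho X' Y'" "trace X' = 0"
    unfolding alg_a_def sl2_def by blast
  then have "x + y = rho (X + X') (Y + Y')" "trace (X + X') = 0" by (simp_all add: rho_add trace_add')
  then show "x + y \<in> alg_a" unfolding alg_a_def sl2_def by blast
next
  fix c x assume "x \<in> alg_a"
  then obtain X Y where "x = rho X Y" "trace X = 0"
    unfolding alg_a_def sl2_def by blast
  then have "c *\<^sub>R x = rho (c *\<^sub>R X) (c *\<^sub>R Y)" "trace (c *\<^sub>R X) = 0" by (simp_all add: rho_scale trace_scale')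
  then show "c *\<^sub>R x \<in> alg_a" unfolding alg_a_def sl2_def by blast
qed

definition mkX :: "(nat \<Rightarrow> real) \<Rightarrow> real^2^2" where
  "mkX x = (\<chi> i j. if i = 1 \<and> j = 1 then x 0 else if i = 0 \<and> j = 0 then - x 0
              else if i = 1 then x 1 else x 2)"
definition mkY :: "(nat \<Rightarrow> real) \<Rightarrow> real^2^2" where
  "mkY x = (\<chi> i j. x (3 + 2 * (if i = 0 then 0 else 1) + (if j = 0 then 0 else 1)))"

lemma trace_mkX: "trace (mkX x) = 0"
  by (simp add: trace2 mkX_def)

lemma prm_mk: "\<forall>k<7. prm (mkX x) (mkY x) k = 1 * x k"
proof (intro allI impI)
  fix k :: nat assume "k < 7"
  then show "prm (mkX x) (mkY x) k = 1 * x k"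
    using lt7[OF \<open>k < 7\<close>] by (elim disjE) (simp_all add: prm_def mkX_def mkY_def)
qed

lemma Rf_rho: "(\<chi> w z. Rf x (nx w) (nx z)) = rho (mkX x) (mkY x)"
proof (simp add: vec_eq_iff, intro allI)
  fix w z :: idx
  have "rho (mkX x) (mkY x) $ w $ z = rho (mkX x) (mkY x) $ ix (nx w) $ ix (nx z)"
    by (simp add: ix_nx)
  also have "\<dots> = Rf (prm (mkX x) (mkY x)) (nx w) (nx z)"
    by (rule rho_ix[OF trace_mkX nx_lt nx_lt])
  also have "\<dots> = 1 * Rf x (nx w) (nx z)" by (rule Rf_scale[OF prm_mk])
  finally show "Rf x (nx w) (nx z) = rho (mkX x) (mkY x) $ w $ z" by simp
qed

lemma Rf_alg: "(\<chi> w z. Rf x (nx w) (nx z)) \<in> alg_a"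
  unfolding Rf_rho alg_a_def sl2_def using trace_mkX by blast

lemma En_alg: "(\<chi> w z. En P p q (nx w) (nx z)) \<in> alg_a"
proof -
  consider "p < q" | "q < p" | "p = q" by arith
  then show ?thesis
  proof cases
    case 1 then show ?thesis using Rf_alg by (simp add: En_def)
  next
    case 2
    have "(\<chi> w z. En P p q (nx w) (nx z)) = - (\<chi> w z. Rf (P q p) (nx w) (nx z))"
      using 2 by (simp add: En_def vec_eq_iff)
    then show ?thesis using subspace_neg[OF subspace_alg Rf_alg] by simp
  next
    case 3
    have "(\<chi> w z. En P p q (nx w) (nx z)) = 0"
      using 3 by (simp add: En_def vec_eq_iff)
    then show ?thesis using subspace_0[OF subspace_alg] by simp
  qed
qed

lemma phi0_alg: "phi0 $ u $ v \<in> alg_a"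
  unfolding phi0_def using En_alg by simp

lemma phi0_anti: "phi0 $ u $ v = - phi0 $ v $ u"
  unfolding phi0_def by (simp add: vec_eq_iff En_anti[of P0 "nx u"])

lemma bil_alt: assumes "\<And>p q. \<phi>$p$q = - \<phi>$q$p" shows "bil_app \<phi> v v = 0"
proof -
  let ?S = "bil_app \<phi> v v"
  have "?S = (\<Sum>q\<in>UNIV. \<Sum>p\<in>UNIV. (v$p * v$q) *\<^sub>R \<phi>$p$q)"
    unfolding bil_app_def by (rule sum.swap)
  also have "\<dots> = (\<Sum>q\<in>UNIV. \<Sum>p\<in>UNIV. - ((v$q * v$p) *\<^sub>R \<phi>$q$p))"
  proof (intro sum.cong refl)
    fix p q
    show "(v$p * v$q) *\<^sub>R \<phi>$p$q = - ((v$q * v$p) *\<^sub>R \<phi>$q$p)"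
      using assms[of p q] by (simp add: mult.commute)
  qed
  also have "\<dots> = - ?S" unfolding bil_app_def by (simp add: sum_negf)
  finally have "?S + ?S = 0" by (simp add: eq_neg_iff_add_eq_0)
  then show ?thesis by (metis scaleR_2 scaleR_eq_0_iff zero_neq_numeral)
qed

lemma bil_alg: assumes "\<And>p q. \<phi>$p$q \<in> alg_a" shows "bil_app \<phi> v w \<in> alg_a"
  unfolding bil_app_def
  by (intro subspace_sum[OF subspace_alg] subspace_scale[OF subspace_alg] assms)

lemma bil_mv: "(bil_app \<phi> a b *v c) $ r
   = (\<Sum>s\<in>UNIV. \<Sum>p\<in>UNIV. \<Sum>q\<in>UNIV. c$s * (a$p * (b$q * \<phi>$p$q$r$s)))"
proof -
  have 1: "bil_app \<phi> a b $ r $ s = (\<Sum>p\<in>UNIV. \<Sum>q\<in>UNIV. a$p * (b$q * \<phi>$p$q$r$s))" for s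
    unfolding bil_app_def by (simp add: mult.assoc)
  have "(bil_app \<phi> a b *v c) $ r = (\<Sum>s\<in>UNIV. c$s * bil_app \<phi> a b $ r $ s)"
    by (simp add: matrix_vector_mult_def mult.commute)
  also have "\<dots> = (\<Sum>s\<in>UNIV. \<Sum>p\<in>UNIV. \<Sum>q\<in>UNIV. c$s * (a$p * (b$q * \<phi>$p$q$r$s)))"
    unfolding 1 by (simp only: sum_distrib_left)
  finally show ?thesis .
qed

lemma swap_outer: "(\<Sum>s\<in>UNIV. \<Sum>p\<in>UNIV. \<Sum>q\<in>UNIV. F s p q) = (\<Sum>p\<in>UNIV. \<Sum>s\<in>UNIV. \<Sum>q\<in>UNIV. (F s p q :: real))"
  by (rule sum.swap)

lemma swap_rot: "(\<Sum>s\<in>UNIV. \<Sum>p\<in>UNIV. \<Sum>q\<in>UNIV. F s p q) = (\<Sum>p\<in>UNIV. \<Sum>q\<in>UNIV. \<Sum>s\<in>UNIV. (F s p q :: real))"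
proof -
  have "(\<Sum>s\<in>UNIV. \<Sum>p\<in>UNIV. \<Sum>q\<in>UNIV. F s p q) = (\<Sum>p\<in>UNIV. \<Sum>s\<in>UNIV. \<Sum>q\<in>UNIV. F s p q)"
    by (rule sum.swap)
  also have "\<dots> = (\<Sum>p\<in>UNIV. \<Sum>q\<in>UNIV. \<Sum>s\<in>UNIV. F s p q)"
    by (intro sum.cong refl) (rule sum.swap)
  finally show ?thesis .
qed

lemma sum3_cong: "(\<And>i j k. f i j k = g i j k) \<Longrightarrow>
  (\<Sum>i\<in>UNIV. \<Sum>j\<in>UNIV. \<Sum>k\<in>UNIV. f i j k) = (\<Sum>i\<in>UNIV. \<Sum>j\<in>UNIV. \<Sum>k\<in>UNIV. (g i j k :: real))"
  by simp

lemma sum3_comb: "- (\<Sum>i\<in>UNIV. \<Sum>j\<in>UNIV. \<Sum>k\<in>UNIV. a i j k) + (\<Sum>i\<in>UNIV. \<Sum>j\<in>UNIV. \<Sum>k\<in>UNIV. b i j k)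
   - (\<Sum>i\<in>UNIV. \<Sum>j\<in>UNIV. \<Sum>k\<in>UNIV. c i j k)
   = (\<Sum>i\<in>UNIV. \<Sum>j\<in>UNIV. \<Sum>k\<in>UNIV. (- a i j k + b i j k - c i j k :: real))"
  by (simp add: sum.distrib sum_subtractf sum_negf)

lemma spencer_zero:
  assumes B: "\<And>i j k r. - (\<phi>$j$k$r$i) + \<phi>$i$k$r$j - \<phi>$i$j$r$k = 0"
  shows "spencer2 \<phi> v1 v2 v3 = 0"
proof (simp only: vec_eq_iff zero_index, intro allI)
  fix r
  have t1: "(bil_app \<phi> v2 v3 *v v1) $ r = (\<Sum>i\<in>UNIV. \<Sum>j\<in>UNIV. \<Sum>k\<in>UNIV. v1$i * (v2$j * (v3$k * \<phi>$j$k$r$i)))"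
    by (simp only: bil_mv)
  have t2: "(bil_app \<phi> v1 v3 *v v2) $ r = (\<Sum>i\<in>UNIV. \<Sum>j\<in>UNIV. \<Sum>k\<in>UNIV. v2$j * (v1$i * (v3$k * \<phi>$i$k$r$j)))"
    apply (simp only: bil_mv) apply (rule swap_outer) done
  have t3: "(bil_app \<phi> v1 v2 *v v3) $ r = (\<Sum>i\<in>UNIV. \<Sum>j\<in>UNIV. \<Sum>k\<in>UNIV. v3$k * (v1$i * (v2$j * \<phi>$i$j$r$k)))"
    apply (simp only: bil_mv) apply (rule swap_rot) done
  have zt: "- (v1$i * (v2$j * (v3$k * \<phi>$j$k$r$i))) + v2$j * (v1$i * (v3$k * \<phi>$i$k$r$j))
       - v3$k * (v1$i * (v2$j * \<phi>$i$j$r$k)) = 0" for i j k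
  proof -
    have e: "\<phi>$j$k$r$i = \<phi>$i$k$r$j - \<phi>$i$j$r$k" using B[of j k r i] by simp
    show ?thesis unfolding e by (simp add: algebra_simps)
  qed
  have "spencer2 \<phi> v1 v2 v3 $ r = - ((bil_app \<phi> v2 v3 *v v1) $ r) + (bil_app \<phi> v1 v3 *v v2) $ r
      - (bil_app \<phi> v1 v2 *v v3) $ r"
    unfolding spencer2_def by simp
  also have "\<dots> = (\<Sum>i\<in>UNIV. \<Sum>j\<in>UNIV. \<Sum>k\<in>UNIV.
       - (v1$i * (v2$j * (v3$k * \<phi>$j$k$r$i))) + v2$j * (v1$i * (v3$k * \<phi>$i$k$r$j))
       - v3$k * (v1$i * (v2$j * \<phi>$i$j$r$k)))"
    unfolding t1 t2 t3 by (rule sum3_comb)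
  also have "\<dots> = 0" by (simp only: zt sum.neutral_const)
  finally show "spencer2 \<phi> v1 v2 v3 $ r = 0" .
qed

lemma P0_basis_list: "list_all (\<lambda>i. list_all (\<lambda>j. list_all (\<lambda>k. list_all (\<lambda>r.
   - En P0 j k r i + En P0 i k r j - En P0 i j r k = 0) [0..<8]) [0..<8]) [0..<8]) [0..<8]"
  by code_simp

lemma P0_basis: assumes "i < 8" "j < 8" "k < 8" "r < 8" shows
   "- En P0 j k r i + En P0 i k r j - En P0 i j r k = 0"
proof -
  have m: "i \<in> {0..<8}" "j \<in> {0..<8}" "k \<in> {0..<8}" "r \<in> {0..<8}" using assms by auto
  show ?thesis using m P0_basis_list unfolding list_all_iff set_upt by blast
qed

lemma phi0_kernel: "phi0 \<in> spencer2_kernel"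
proof -
  have B: "- (phi0$j$k$r$i) + phi0$i$k$r$j - phi0$i$j$r$k = 0" for i j k r
    unfolding phi0_def using P0_basis[OF nx_lt nx_lt nx_lt nx_lt] by simp
  have "bil_app phi0 v v = 0" for v using bil_alt phi0_anti by blast
  moreover have "bil_app phi0 v w \<in> alg_a" for v w using bil_alg phi0_alg by blast
  ultimately have "phi0 \<in> Hom2_a" unfolding Hom2_a_def by blast
  then show ?thesis unfolding spencer2_kernel_def using spencer_zero[OF B] by blast
qed

lemma nx_ix: assumes "n < 8" shows "nx (ix n) = n"
  using lt8[OF assms] by (elim disjE) (simp_all add: nx_def ix_def i4_def i2_def)

lemma phi0_nz: "phi0 \<noteq> 0"
proof
  assume "phi0 = 0"
  then have "phi0 $ ix 4 $ ix 5 $ ix 2 $ ix 0 = 0" by simp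
  moreover have "phi0 $ ix 4 $ ix 5 $ ix 2 $ ix 0 = 3"
    unfolding phi0_def by (simp add: nx_ix En_def Rf_def sk_def P0_def)
  ultimately show False by simp
qed

theorem lemma5:
  shows "dim spencer2_kernel = 1"
proof -
  have sub: "spencer2_kernel \<subseteq> span {phi0}" using ker_mult by blast
  have "span spencer2_kernel = span {phi0}"
  proof
    show "span spencer2_kernel \<subseteq> span {phi0}"
      using sub by (simp add: span_minimal subspace_span)
    show "span {phi0} \<subseteq> span spencer2_kernel"
      using phi0_kernel by (simp add: span_mono)
  qed
  then have "dim spencer2_kernel = dim {phi0}" by (metis dim_span)
  then show ?thesis using phi0_nz by simp
qed

end
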